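(* Let $X_1,\ldots,X_n$ be non-empty sets and let $L=\{x_1,\ldots,x_k\}\subset X_1\times\cdots\times X_n$ be a loop. Then there exist integers $n_1,\ldots,n_k$ with $\gcd(n_1,\ldots,n_k)=1$ such that the formal sum $\sum_{j=1}^k n_jx_j$ vanishes, and such a tuple $(n_1,\ldots,n_k)$ is unique up to a global sign: if $(m_1,\ldots,m_k)$ is another tuple of integers with $\gcd(m_1,\ldots,m_k)=1$ for which $\sum_j m_jx_j$ vanishes, then either $m_j=n_j$ for all $j$ or $m_j=-n_j$ for all $j$.
   Context: For points $x_1,\ldots,x_k\in X_1\times\cdots\times X_n$ (with $x_j=(x_{j1},\ldots,x_{jn})$) and numbers $c_1,\ldots,c_k$, the formal sum $\sum_j c_jx_j$ vanishes (coordinate-wise) if for every $i\in\{1,\ldots,n\}$ and every $a\in X_i$, $\sum_{j:\,x_{ji}=a}c_j=0$. A non-empty finite set $L=\{x_1,\ldots,x_k\}$ of distinct points is a loop if there exist non-zero integers $n_1,\ldots,n_k$ such that $\sum_j n_jx_j$ vanishes, and no strictly smaller non-empty subset of $L$ has this property. *)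

theory Defs
  imports Main "HOL-Library.FuncSet"
begin

text \<open>Points of X_1 x ... x X_n are functions on the index set {..<n} (coordinates 0..n-1),
  extensional outside it (PiE). A formal sum over a finite set L of points is given by a
  coefficient function c on L.\<close>

definition vanishes :: "nat \<Rightarrow> (nat \<Rightarrow> 'a set) \<Rightarrow> (nat \<Rightarrow> 'a) set \<Rightarrow> ((nat \<Rightarrow> 'a) \<Rightarrow> int) \<Rightarrow> bool" where
  "vanishes n X L c \<longleftrightarrow>
     (\<forall>i<n. \<forall>a\<in>X i. (\<Sum>x\<in>{x\<in>L. x i = a}. c x) = 0)"

definition is_loop :: "nat \<Rightarrow> (nat \<Rightarrow> 'a set) \<Rightarrow> (nat \<Rightarrow> 'a) set \<Rightarrow> bool" where
  "is_loop n X L \<longleftrightarrow>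
     finite L \<and> L \<noteq> {} \<and> L \<subseteq> PiE {..<n} X \<and>
     (\<exists>c. (\<forall>x\<in>L. c x \<noteq> 0) \<and> vanishes n X L c) \<and>
     (\<forall>L'. L' \<noteq> {} \<and> L' \<subset> L \<longrightarrow>
        \<not> (\<exists>c. (\<forall>x\<in>L'. c x \<noteq> 0) \<and> vanishes n X L' c))"

end

theory Submission
  imports Defs
begin

lemma vanishes_lin:
  assumes "vanishes n X L c" "vanishes n X L m"
  shows "vanishes n X L (\<lambda>x. p * m x - q * c x)"
  using assms unfolding vanishes_def
  by (simp add: sum_subtractf sum_distrib_left[symmetric])

lemma vanishes_restrict:
  assumes "finite L" "vanishes n X L d"
  shows "vanishes n X {x\<in>L. d x \<noteq> 0} d"
  unfolding vanishes_def
proof (intro allI impI ballI)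
  fix i a assume "i < n" "a \<in> X i"
  have "(\<Sum>x\<in>{x\<in>{x\<in>L. d x \<noteq> 0}. x i = a}. d x) = (\<Sum>x\<in>{x\<in>L. x i = a}. d x)"
    by (rule sum.mono_neutral_left) (use assms(1) in auto)
  also have "\<dots> = 0" using assms(2) \<open>i < n\<close> \<open>a \<in> X i\<close> unfolding vanishes_def by blast
  finally show "(\<Sum>x\<in>{x\<in>{x\<in>L. d x \<noteq> 0}. x i = a}. d x) = 0" .
qed

lemma loop_prop:
  assumes loop: "is_loop n X L" and c: "\<forall>x\<in>L. c x \<noteq> 0" "vanishes n X L c"
    and m: "vanishes n X L m" and x0: "x0 \<in> L"
  shows "\<forall>x\<in>L. c x0 * m x = m x0 * c x"
proof (rule ccontr)
  assume neg: "\<not> (\<forall>x\<in>L. c x0 * m x = m x0 * c x)"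
  define d where "d = (\<lambda>x. c x0 * m x - m x0 * c x)"
  define L' where "L' = {x\<in>L. d x \<noteq> 0}"
  have ne: "L' \<noteq> {}" using neg unfolding d_def L'_def by auto
  have "d x0 = 0" unfolding d_def by (simp add: mult.commute)
  hence sub: "L' \<subset> L" using x0 unfolding L'_def by auto
  have fin: "finite L" using loop unfolding is_loop_def by simp
  have vd: "vanishes n X L d" unfolding d_def by (rule vanishes_lin[OF c(2) m])
  have v: "vanishes n X L' d" unfolding L'_def by (rule vanishes_restrict[OF fin vd])
  have nz: "\<forall>x\<in>L'. d x \<noteq> 0" unfolding L'_def by simp
  have "\<not> (\<exists>c. (\<forall>x\<in>L'. c x \<noteq> 0) \<and> vanishes n X L' c)"
    using loop ne sub unfolding is_loop_def by simp
  thus False using nz v by blast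
qed

theorem lemma2:
  fixes n :: nat and X :: "nat \<Rightarrow> 'a set" and L :: "(nat \<Rightarrow> 'a) set"
  assumes "\<And>i. i < n \<Longrightarrow> X i \<noteq> {}"
    and "is_loop n X L"
  shows "\<exists>c :: (nat \<Rightarrow> 'a) \<Rightarrow> int. Gcd (c ` L) = 1 \<and> vanishes n X L c \<and>
           (\<forall>m :: (nat \<Rightarrow> 'a) \<Rightarrow> int. Gcd (m ` L) = 1 \<and> vanishes n X L m \<longrightarrow>
              (\<forall>x\<in>L. m x = c x) \<or> (\<forall>x\<in>L. m x = - c x))"
proof -
  note loop = assms(2)
  obtain c0 where c0: "\<forall>x\<in>L. c0 x \<noteq> 0" "vanishes n X L c0"
    using loop unfolding is_loop_def by blast
  obtain x0 where x0: "x0 \<in> L" using loop unfolding is_loop_def by blast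
  define g where "g = Gcd (c0 ` L)"
  have g0: "g \<noteq> 0"
  proof
    assume "g = 0"
    hence "0 dvd c0 x0" using Gcd_dvd[of "c0 x0" "c0 ` L"] x0 unfolding g_def by (simp del: Gcd_0_iff)
    thus False using c0(1) x0 by simp
  qed
  define c where "c = (\<lambda>x. c0 x div g)"
  have c0c: "c0 x = g * c x" if "x \<in> L" for x
    using Gcd_dvd[of "c0 x" "c0 ` L"] that unfolding c_def g_def by auto
  have cnz: "\<forall>x\<in>L. c x \<noteq> 0" using c0(1) c0c by fastforce
  have cv: "vanishes n X L c"
    unfolding vanishes_def
  proof (intro allI impI ballI)
    fix i a assume "i < n" "a \<in> X i"
    have "g * (\<Sum>x\<in>{x\<in>L. x i = a}. c x) = (\<Sum>x\<in>{x\<in>L. x i = a}. c0 x)"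
      by (simp add: sum_distrib_left c0c)
    also have "\<dots> = 0" using c0(2) \<open>i < n\<close> \<open>a \<in> X i\<close> unfolding vanishes_def by blast
    finally show "(\<Sum>x\<in>{x\<in>L. x i = a}. c x) = 0" using g0 by simp
  qed
  have cg: "Gcd (c ` L) = 1"
  proof -
    let ?h = "Gcd (c ` L)"
    have "g * ?h dvd c0 x" if "x \<in> L" for x
      using c0c[OF that] Gcd_dvd[of "c x" "c ` L"] that by (simp add: mult_dvd_mono)
    hence "g * ?h dvd Gcd (c0 ` L)" by (intro Gcd_greatest) auto
    hence "g * ?h dvd g" unfolding g_def .
    hence "g * ?h dvd g * 1" by simp
    hence "?h dvd 1" using g0 dvd_mult_cancel_left[of g ?h 1] by blast
    moreover have "?h \<ge> 0" by simp
    ultimately show ?thesis by (simp add: zdvd1_eq) 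
  qed
  show ?thesis
  proof (intro exI[of _ c] conjI cg cv allI impI)
    fix m assume m: "Gcd (m ` L) = 1 \<and> vanishes n X L m"
    have key: "\<forall>x\<in>L. c x0 * m x = m x0 * c x"
      using loop_prop[OF loop cnz cv _ x0] m by blast
    define p where "p = c x0"
    define q where "q = m x0"
    have "p dvd q * c x" if "x \<in> L" for x
    proof -
      have "q * c x = p * m x" using key that unfolding p_def q_def by simp
      thus ?thesis by simp
    qed
    hence "p dvd Gcd ((*) q ` (c ` L))" by (auto intro!: Gcd_greatest)
    hence pq: "p dvd q" using cg by (simp add: Gcd_mult)
    have "q dvd p * m x" if "x \<in> L" for x
    proof -
      have "p * m x = q * c x" using key that unfolding p_def q_def by simp
      thus ?thesis by simp
    qed
    hence "q dvd Gcd ((*) p ` (m ` L))" by (auto intro!: Gcd_greatest)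
    hence qp: "q dvd p" using m by (simp add: Gcd_mult)
    have p0: "p \<noteq> 0" using cnz x0 p_def by simp
    have "\<bar>p\<bar> = \<bar>q\<bar>" using zdvd_antisym_abs[OF pq qp] .
    hence "q = p \<or> q = - p" by arith
    thus "(\<forall>x\<in>L. m x = c x) \<or> (\<forall>x\<in>L. m x = - c x)"
    proof
      assume "q = p"
      hence "\<forall>x\<in>L. m x = c x" using key p0 unfolding p_def q_def by simp
      thus ?thesis by blast
    next
      assume "q = - p"
      hence "\<forall>x\<in>L. p * m x = p * (- c x)" using key unfolding p_def q_def by simp
      hence "\<forall>x\<in>L. m x = - c x" using p0 mult_cancel_left[of p] by blast
      thus ?thesis by blast
    qed
  qed
qed

end
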